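(* (a) Let $\langle A,\le\rangle$ be a poset with a partition pair $\langle\otimes,\odot\rangle$. Let $I\subseteq A$ be a set of representatives of the classes of $\equiv_\odot$ (equivalently $\equiv_\otimes$), made into a join-semilattice by letting $p\vee q$ be the representative of the class of $p\odot q$, let $A_p$ be the class of $p$ with the restricted order $\le_p$, and for $p\preceq_\odot q$ in $I$ define $\psi_{pq}(a):=a\otimes q$, $\varphi_{pq}(a):=a\odot q$ ($a\in A_p$). Then these maps are well-defined monotone maps $A_p\to A_q$ forming a directed system (identities at $p=q$, closed under composition) which satisfies conditions (S1) and (S2) below, and for $a\in A_p$, $b\in A_q$, $s=p\vee q$: $a\le b$ iff $\varphi_{ps}(a)\le_s\psi_{qs}(b)$. (b) Conversely, let $\mathbf I$ be a join-semilattice, $\langle A_p,\le_p\rangle$ ($p\in I$) pairwise disjoint posets and $\psi_{pq},\varphi_{pq}:A_p\to A_q$ ($p\preceq q$) monotone maps with $\varphi_{pp}=\psi_{pp}=\mathrm{id}$, $\varphi_{qr}\varphi_{pq}=\varphi_{pr}$, $\psi_{qr}\psi_{pq}=\psi_{pr}$, satisfying (S1) and (S2); let $\le$ on $A=\biguplus A_p$ be defined by $a\le b$ iff $\varphi_{ps}(a)\le_s\psi_{qs}(b)$ ($a\in A_p$, $b\in A_q$, $s=p\vee q$). Then $a\otimes b:=\psi_{ps}(a)$ and $a\odot b:=\varphi_{ps}(a)$ define a partition pair on $\langle A,\le\rangle$ whose induced maps as in (a) are the given $\psi_{pq},\varphi_{pq}$. Here (S1): if $p\prec q$, $p\prec r$,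 $t=q\vee r$, then $\varphi_{qt}(\psi_{pq}(a))\le_t\psi_{rt}(\varphi_{pr}(a))$ for all $a\in A_p$; (S2): if $p\prec q$, $a,b\in A_p$ and $\varphi_{pq}(a)\le_q\psi_{pq}(b)$, then $a<_pb$.
   Context: A left normal band on a set $A$ is a binary operation $\odot$ with $a\odot a=a$, $a\odot(b\odot c)=(a\odot b)\odot c$, $a\odot(b\odot c)=a\odot(c\odot b)$ for all $a,b,c$. Put $a\preceq_\odot b\iff b\odot a=b$, and $a\equiv_\odot b$ iff $a\preceq_\odot b$ and $b\preceq_\odot a$; the quotient by $\equiv_\odot$ is a join-semilattice under the induced operation. Two left normal bands are homotactic if they induce the same preorder $\preceq$. A partition pair for a poset $\langle A,\le\rangle$ is a pair $\langle\otimes,\odot\rangle$ of homotactic left normal bands on $A$ such that (PS1) if $a\le b$ then $a\otimes c\le b\otimes c$ and $a\odot c\le b\odot c$ for all $c$; (PS2) if $a\odot b\le b\otimes a$ then $a\le b$. *)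

theory Defs
  imports Main
begin

definition lnband :: "'a set \<Rightarrow> ('a \<Rightarrow> 'a \<Rightarrow> 'a) \<Rightarrow> bool" where
  "lnband A f \<longleftrightarrow>
     (\<forall>a\<in>A. \<forall>b\<in>A. f a b \<in> A) \<and>
     (\<forall>a\<in>A. f a a = a) \<and>
     (\<forall>a\<in>A. \<forall>b\<in>A. \<forall>c\<in>A. f a (f b c) = f (f a b) c) \<and>
     (\<forall>a\<in>A. \<forall>b\<in>A. \<forall>c\<in>A. f a (f b c) = f a (f c b))"

definition bpre :: "('a \<Rightarrow> 'a \<Rightarrow> 'a) \<Rightarrow> 'a \<Rightarrow> 'a \<Rightarrow> bool" where
  "bpre f a b \<longleftrightarrow> f b a = b"

definition bequiv :: "('a \<Rightarrow> 'a \<Rightarrow> 'a) \<Rightarrow> 'a \<Rightarrow> 'a \<Rightarrow> bool" where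
  "bequiv f a b \<longleftrightarrow> bpre f a b \<and> bpre f b a"

definition homotactic :: "'a set \<Rightarrow> ('a \<Rightarrow> 'a \<Rightarrow> 'a) \<Rightarrow> ('a \<Rightarrow> 'a \<Rightarrow> 'a) \<Rightarrow> bool" where
  "homotactic A f g \<longleftrightarrow> (\<forall>a\<in>A. \<forall>b\<in>A. bpre f a b \<longleftrightarrow> bpre g a b)"

definition poset_on :: "'a set \<Rightarrow> ('a \<Rightarrow> 'a \<Rightarrow> bool) \<Rightarrow> bool" where
  "poset_on A le \<longleftrightarrow>
     (\<forall>a\<in>A. le a a) \<and>
     (\<forall>a\<in>A. \<forall>b\<in>A. le a b \<and> le b a \<longrightarrow> a = b) \<and>
     (\<forall>a\<in>A. \<forall>b\<in>A. \<forall>c\<in>A. le a b \<and> le b c \<longrightarrow> le a c)"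

text \<open>Partition pair (ot = \<otimes>, od = \<odot>) for the order le on A.\<close>
definition partition_pair ::
  "'a set \<Rightarrow> ('a \<Rightarrow> 'a \<Rightarrow> bool) \<Rightarrow> ('a \<Rightarrow> 'a \<Rightarrow> 'a) \<Rightarrow> ('a \<Rightarrow> 'a \<Rightarrow> 'a) \<Rightarrow> bool" where
  "partition_pair A le ot od \<longleftrightarrow>
     lnband A ot \<and> lnband A od \<and> homotactic A ot od \<and>
     (\<forall>a\<in>A. \<forall>b\<in>A. \<forall>c\<in>A. le a b \<longrightarrow> le (ot a c) (ot b c) \<and> le (od a c) (od b c)) \<and>
     (\<forall>a\<in>A. \<forall>b\<in>A. le (od a b) (ot b a) \<longrightarrow> le a b)"

definition join_semilattice :: "'i set \<Rightarrow> ('i \<Rightarrow> 'i \<Rightarrow> 'i) \<Rightarrow> bool" where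
  "join_semilattice I jn \<longleftrightarrow>
     (\<forall>p\<in>I. \<forall>q\<in>I. jn p q \<in> I) \<and>
     (\<forall>p\<in>I. jn p p = p) \<and>
     (\<forall>p\<in>I. \<forall>q\<in>I. jn p q = jn q p) \<and>
     (\<forall>p\<in>I. \<forall>q\<in>I. \<forall>r\<in>I. jn p (jn q r) = jn (jn p q) r)"

definition jle :: "('i \<Rightarrow> 'i \<Rightarrow> 'i) \<Rightarrow> 'i \<Rightarrow> 'i \<Rightarrow> bool" where
  "jle jn p q \<longleftrightarrow> jn p q = q"

definition jlt :: "('i \<Rightarrow> 'i \<Rightarrow> 'i) \<Rightarrow> 'i \<Rightarrow> 'i \<Rightarrow> bool" where
  "jlt jn p q \<longleftrightarrow> jle jn p q \<and> p \<noteq> q"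

definition dir_system ::
  "'i set \<Rightarrow> ('i \<Rightarrow> 'i \<Rightarrow> 'i) \<Rightarrow> ('i \<Rightarrow> 'a set) \<Rightarrow> ('i \<Rightarrow> 'a \<Rightarrow> 'a \<Rightarrow> bool)
    \<Rightarrow> ('i \<Rightarrow> 'i \<Rightarrow> 'a \<Rightarrow> 'a) \<Rightarrow> ('i \<Rightarrow> 'i \<Rightarrow> 'a \<Rightarrow> 'a) \<Rightarrow> bool" where
  "dir_system I jn Ap leP psi phi \<longleftrightarrow>
     join_semilattice I jn \<and>
     (\<forall>p\<in>I. poset_on (Ap p) (leP p)) \<and>
     (\<forall>p\<in>I. \<forall>q\<in>I. p \<noteq> q \<longrightarrow> Ap p \<inter> Ap q = {}) \<and>
     (\<forall>p\<in>I. \<forall>q\<in>I. jle jn p q \<longrightarrow>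
        (\<forall>a\<in>Ap p. psi p q a \<in> Ap q \<and> phi p q a \<in> Ap q) \<and>
        (\<forall>a\<in>Ap p. \<forall>b\<in>Ap p. leP p a b \<longrightarrow>
            leP q (psi p q a) (psi p q b) \<and> leP q (phi p q a) (phi p q b))) \<and>
     (\<forall>p\<in>I. \<forall>a\<in>Ap p. psi p p a = a \<and> phi p p a = a) \<and>
     (\<forall>p\<in>I. \<forall>q\<in>I. \<forall>r\<in>I. jle jn p q \<and> jle jn q r \<longrightarrow>
        (\<forall>a\<in>Ap p. psi q r (psi p q a) = psi p r a \<and> phi q r (phi p q a) = phi p r a))"

definition cond_S1 ::
  "'i set \<Rightarrow> ('i \<Rightarrow> 'i \<Rightarrow> 'i) \<Rightarrow> ('i \<Rightarrow> 'a set) \<Rightarrow> ('i \<Rightarrow> 'a \<Rightarrow> 'a \<Rightarrow> bool)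
    \<Rightarrow> ('i \<Rightarrow> 'i \<Rightarrow> 'a \<Rightarrow> 'a) \<Rightarrow> ('i \<Rightarrow> 'i \<Rightarrow> 'a \<Rightarrow> 'a) \<Rightarrow> bool" where
  "cond_S1 I jn Ap leP psi phi \<longleftrightarrow>
     (\<forall>p\<in>I. \<forall>q\<in>I. \<forall>r\<in>I. jlt jn p q \<and> jlt jn p r \<longrightarrow>
        (\<forall>a\<in>Ap p. leP (jn q r) (phi q (jn q r) (psi p q a)) (psi r (jn q r) (phi p r a))))"

definition cond_S2 ::
  "'i set \<Rightarrow> ('i \<Rightarrow> 'i \<Rightarrow> 'i) \<Rightarrow> ('i \<Rightarrow> 'a set) \<Rightarrow> ('i \<Rightarrow> 'a \<Rightarrow> 'a \<Rightarrow> bool)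
    \<Rightarrow> ('i \<Rightarrow> 'i \<Rightarrow> 'a \<Rightarrow> 'a) \<Rightarrow> ('i \<Rightarrow> 'i \<Rightarrow> 'a \<Rightarrow> 'a) \<Rightarrow> bool" where
  "cond_S2 I jn Ap leP psi phi \<longleftrightarrow>
     (\<forall>p\<in>I. \<forall>q\<in>I. jlt jn p q \<longrightarrow>
        (\<forall>a\<in>Ap p. \<forall>b\<in>Ap p. leP q (phi p q a) (psi p q b) \<longrightarrow> leP p a b \<and> a \<noteq> b))"

end

theory Submission imports Defs begin

locale lnb = fixes A :: "'a set" and f assumes lnb: "lnband A f"
begin
lemma cl: "a\<in>A \<Longrightarrow> b\<in>A \<Longrightarrow> f a b \<in> A" using lnb unfolding lnband_def by blast
lemma idem: "a\<in>A \<Longrightarrow> f a a = a" using lnb unfolding lnband_def by blast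
lemma assoc: "a\<in>A \<Longrightarrow> b\<in>A \<Longrightarrow> c\<in>A \<Longrightarrow> f a (f b c) = f (f a b) c" using lnb unfolding lnband_def by blast
lemma ln: "a\<in>A \<Longrightarrow> b\<in>A \<Longrightarrow> c\<in>A \<Longrightarrow> f a (f b c) = f a (f c b)" using lnb unfolding lnband_def by blast
lemma swap: "a\<in>A \<Longrightarrow> b\<in>A \<Longrightarrow> c\<in>A \<Longrightarrow> f (f a b) c = f (f a c) b"
  by (metis assoc ln)
lemma pre_refl: "a\<in>A \<Longrightarrow> bpre f a a" by (simp add: bpre_def idem)
lemma pre_trans: "a\<in>A \<Longrightarrow> b\<in>A \<Longrightarrow> c\<in>A \<Longrightarrow> bpre f a b \<Longrightarrow> bpre f b c \<Longrightarrow> bpre f a c"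
  unfolding bpre_def by (metis assoc)
lemma pre_left: "a\<in>A \<Longrightarrow> b\<in>A \<Longrightarrow> bpre f a (f a b)"
  unfolding bpre_def by (metis assoc ln idem)
lemma pre_right: "a\<in>A \<Longrightarrow> b\<in>A \<Longrightarrow> bpre f b (f a b)"
  unfolding bpre_def by (metis assoc idem)
lemma pre_lub: "a\<in>A \<Longrightarrow> b\<in>A \<Longrightarrow> c\<in>A \<Longrightarrow> bpre f a c \<Longrightarrow> bpre f b c \<Longrightarrow> bpre f (f a b) c"
  unfolding bpre_def by (metis assoc)
lemma right_class: "a\<in>A \<Longrightarrow> x\<in>A \<Longrightarrow> y\<in>A \<Longrightarrow> bpre f x y \<Longrightarrow> bpre f y x \<Longrightarrow> f a x = f a y"
  unfolding bpre_def by (metis assoc swap)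
lemma lub_iff: "a\<in>A \<Longrightarrow> b\<in>A \<Longrightarrow> z\<in>A \<Longrightarrow> bpre f (f a b) z \<longleftrightarrow> bpre f a z \<and> bpre f b z"
  by (meson cl pre_left pre_lub pre_right pre_trans)
end
locale PA =
  fixes A :: "'a set" and le ot od and I :: "'a set" and jn
  assumes po: "poset_on A le" and pp: "partition_pair A le ot od" and IA: "I \<subseteq> A"
    and rep: "\<forall>a\<in>A. \<exists>!p. p \<in> I \<and> bequiv od a p"
    and jnI: "\<forall>p\<in>I. \<forall>q\<in>I. jn p q \<in> I \<and> bequiv od (od p q) (jn p q)"
begin
sublocale T: lnb A ot using pp unfolding partition_pair_def lnb_def by blast
sublocale D: lnb A od using pp unfolding partition_pair_def lnb_def by blast

lemma hom: "a\<in>A \<Longrightarrow> b\<in>A \<Longrightarrow> bpre ot a b = bpre od a b"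
  using pp unfolding partition_pair_def homotactic_def by blast
lemma le_refl: "a\<in>A \<Longrightarrow> le a a" using po unfolding poset_on_def by blast
lemma le_antisym: "a\<in>A \<Longrightarrow> b\<in>A \<Longrightarrow> le a b \<Longrightarrow> le b a \<Longrightarrow> a = b" using po unfolding poset_on_def by blast
lemma le_trans: "a\<in>A \<Longrightarrow> b\<in>A \<Longrightarrow> c\<in>A \<Longrightarrow> le a b \<Longrightarrow> le b c \<Longrightarrow> le a c" using po unfolding poset_on_def by blast
lemma ps1_ot: "a\<in>A \<Longrightarrow> b\<in>A \<Longrightarrow> c\<in>A \<Longrightarrow> le a b \<Longrightarrow> le (ot a c) (ot b c)"
  using pp unfolding partition_pair_def by blast
lemma ps1_od: "a\<in>A \<Longrightarrow> b\<in>A \<Longrightarrow> c\<in>A \<Longrightarrow> le a b \<Longrightarrow> le (od a c) (od b c)"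
  using pp unfolding partition_pair_def by blast
lemma ps2: "a\<in>A \<Longrightarrow> b\<in>A \<Longrightarrow> le (od a b) (ot b a) \<Longrightarrow> le a b"
  using pp unfolding partition_pair_def by blast

abbreviation pre where "pre \<equiv> bpre od"
abbreviation E where "E \<equiv> bequiv od"

lemma ot_le: "a\<in>A \<Longrightarrow> b\<in>A \<Longrightarrow> le (ot a b) a"
proof -
  assume a: "a\<in>A" "b\<in>A"
  have 1: "od (ot a b) a = ot a b" using T.pre_left[OF a] hom[of a "ot a b"] a T.cl unfolding bpre_def by simp
  have 2: "ot a (ot a b) = ot a b" using a by (simp add: T.assoc T.idem)
  show ?thesis using ps2[of "ot a b" a] 1 2 a T.cl le_refl by simp
qed
lemma le_od: "a\<in>A \<Longrightarrow> b\<in>A \<Longrightarrow> le a (od a b)"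
proof -
  assume a: "a\<in>A" "b\<in>A"
  have 1: "ot (od a b) a = od a b" using D.pre_left[OF a] hom[of a "od a b"] a D.cl unfolding bpre_def by simp
  have 2: "od a (od a b) = od a b" using a by (simp add: D.assoc D.idem)
  show ?thesis using ps2[of a "od a b"] 1 2 a D.cl le_refl by simp
qed
lemma K: "x\<in>A \<Longrightarrow> y\<in>A \<Longrightarrow> le x y \<Longrightarrow> le (od x y) (ot y x)"
proof -
  assume a: "x\<in>A" "y\<in>A" "le x y"
  have "le x (ot y x)" using ps1_ot[of x y x] a T.idem by simp
  hence "le (od x y) (od (ot y x) y)" using ps1_od a T.cl by blast
  moreover have "od (ot y x) y = ot y x" using T.pre_left[of y x] hom[of y "ot y x"] a T.cl unfolding bpre_def by simp
  ultimately show ?thesis by simp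
qed
lemma char: "x\<in>A \<Longrightarrow> y\<in>A \<Longrightarrow> le x y \<longleftrightarrow> le (od x y) (ot y x)"
  using K ps2 by blast

lemma E_iff: "x\<in>A \<Longrightarrow> y\<in>A \<Longrightarrow> E x y \<longleftrightarrow> (\<forall>z\<in>A. pre x z \<longleftrightarrow> pre y z)"
proof
  assume a: "x\<in>A" "y\<in>A" "E x y"
  show "\<forall>z\<in>A. pre x z \<longleftrightarrow> pre y z"
  proof
    fix z assume "z\<in>A" thus "pre x z \<longleftrightarrow> pre y z" using a D.pre_trans[of x y z] D.pre_trans[of y x z] unfolding bequiv_def by blast
  qed
next
  assume a: "x\<in>A" "y\<in>A" "\<forall>z\<in>A. pre x z \<longleftrightarrow> pre y z"
  show "E x y" unfolding bequiv_def using a D.pre_refl by blast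
qed
lemma E_pre: "E x y \<Longrightarrow> pre x y" unfolding bequiv_def by simp
lemma E_sym: "E x y \<Longrightarrow> E y x" unfolding bequiv_def by simp
lemma repuniq: "p\<in>I \<Longrightarrow> q\<in>I \<Longrightarrow> E p q \<Longrightarrow> p = q"
proof -
  assume a: "p\<in>I" "q\<in>I" "E p q"
  have "p\<in>A" using a IA by auto
  hence u: "\<exists>!r. r \<in> I \<and> E p r" using rep by blast
  have "E p p" using \<open>p\<in>A\<close> D.pre_refl unfolding bequiv_def by simp
  show ?thesis using u a \<open>E p p\<close> by blast
qed
lemma lub_ot: "a\<in>A \<Longrightarrow> b\<in>A \<Longrightarrow> z\<in>A \<Longrightarrow> pre (ot a b) z \<longleftrightarrow> pre a z \<and> pre b z"
proof -
  assume a: "a\<in>A" "b\<in>A" "z\<in>A"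
  have "pre (ot a b) z = bpre ot (ot a b) z" using hom a T.cl by simp
  also have "\<dots> = (bpre ot a z \<and> bpre ot b z)" using T.lub_iff a by simp
  finally show ?thesis using hom a by simp
qed
lemma jn_lub: "p\<in>I \<Longrightarrow> q\<in>I \<Longrightarrow> z\<in>A \<Longrightarrow> pre (jn p q) z \<longleftrightarrow> pre p z \<and> pre q z"
proof -
  assume a: "p\<in>I" "q\<in>I" "z\<in>A"
  have A: "p\<in>A" "q\<in>A" "jn p q \<in> A" using a jnI IA by auto
  have "E (od p q) (jn p q)" using a jnI by auto
  hence "pre (jn p q) z = pre (od p q) z" using E_iff A D.cl a by blast
  thus ?thesis using D.lub_iff A a by simp
qed
lemma jnA: "p\<in>I \<Longrightarrow> q\<in>I \<Longrightarrow> jn p q \<in> I" using jnI by auto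

lemma rc_od: "a\<in>A \<Longrightarrow> x\<in>A \<Longrightarrow> y\<in>A \<Longrightarrow> E x y \<Longrightarrow> od a x = od a y"
  using D.right_class unfolding bequiv_def by blast
lemma rc_ot: "a\<in>A \<Longrightarrow> x\<in>A \<Longrightarrow> y\<in>A \<Longrightarrow> E x y \<Longrightarrow> ot a x = ot a y"
proof -
  assume a: "a\<in>A" "x\<in>A" "y\<in>A" "E x y"
  hence "bpre ot x y" "bpre ot y x" using hom unfolding bequiv_def by auto
  thus ?thesis using T.right_class a by blast
qed
lemma a1: "p\<in>I \<Longrightarrow> q\<in>I \<Longrightarrow> jle jn p q \<longleftrightarrow> pre p q"
proof
  assume a: "p\<in>I" "q\<in>I" "jle jn p q"
  hence "jn p q = q" unfolding jle_def by simp
  moreover have "jn p q \<in> A" using a jnA IA by auto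
  moreover have "pre p (jn p q)" using jn_lub[of p q "jn p q"] a \<open>jn p q \<in> A\<close> D.pre_refl by blast
  ultimately show "pre p q" by simp
next
  assume a: "p\<in>I" "q\<in>I" "pre p q"
  have A: "p\<in>A" "q\<in>A" "jn p q \<in> A" using a jnA IA by auto
  have "\<forall>z\<in>A. pre (jn p q) z \<longleftrightarrow> pre q z"
  proof
    fix z assume "z\<in>A" thus "pre (jn p q) z \<longleftrightarrow> pre q z"
      using jn_lub[of p q z] a A D.pre_trans[of p q z] by blast
  qed
  hence "E (jn p q) q" using E_iff[of "jn p q" q] A by blast
  thus "jle jn p q" using repuniq a jnA unfolding jle_def by blast
qed

lemma jsl: "join_semilattice I jn"
proof -
  have eq: "x = y" if "x\<in>I" "y\<in>I" "\<forall>z\<in>A. pre x z \<longleftrightarrow> pre y z" for x y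
  proof -
    have "E x y" using E_iff[of x y] that IA by blast
    thus ?thesis using repuniq that by blast
  qed
  show ?thesis unfolding join_semilattice_def
  proof (intro conjI ballI)
    fix p q r assume a: "p\<in>I" "q\<in>I" "r\<in>I"
    show "jn p q \<in> I" using a jnA by simp
    have "\<forall>z\<in>A. pre (jn p p) z \<longleftrightarrow> pre p z"
    proof
      fix z assume "z\<in>A" thus "pre (jn p p) z \<longleftrightarrow> pre p z" using jn_lub[of p p z] a by simp
    qed
    thus "jn p p = p" using eq[of "jn p p" p] a jnA by simp
    have "\<forall>z\<in>A. pre (jn p q) z \<longleftrightarrow> pre (jn q p) z"
    proof
      fix z assume "z\<in>A" thus "pre (jn p q) z \<longleftrightarrow> pre (jn q p) z" using jn_lub[of p q z] jn_lub[of q p z] a by auto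
    qed
    thus "jn p q = jn q p" using eq[of "jn p q" "jn q p"] a jnA by simp
    have "\<forall>z\<in>A. pre (jn p (jn q r)) z \<longleftrightarrow> pre (jn (jn p q) r) z"
    proof
      fix z assume z: "z\<in>A"
      have 1: "pre (jn p (jn q r)) z \<longleftrightarrow> pre p z \<and> pre (jn q r) z" using jn_lub[of p "jn q r" z] a jnA z by simp
      have 2: "pre (jn (jn p q) r) z \<longleftrightarrow> pre (jn p q) z \<and> pre r z" using jn_lub[of "jn p q" r z] a jnA z by simp
      show "pre (jn p (jn q r)) z \<longleftrightarrow> pre (jn (jn p q) r) z"
        unfolding 1 2 using jn_lub[of q r z] jn_lub[of p q z] a z by auto
    qed
    thus "jn p (jn q r) = jn (jn p q) r" using eq[of "jn p (jn q r)" "jn (jn p q) r"] a jnA by simp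
  qed
qed
lemma S1core:
  assumes A: "a\<in>A" "q\<in>A" "r\<in>A" "t\<in>A" and pq: "pre a q" "pre a r"
    and t: "\<forall>z\<in>A. pre t z \<longleftrightarrow> pre q z \<and> pre r z"
  shows "le (od (ot a q) t) (ot (od a r) t)"
proof -
  define x where "x = ot a q"
  define y where "y = od a r"
  have xA: "x\<in>A" "y\<in>A" using A T.cl D.cl x_def y_def by auto
  have Ex: "E x q" using E_iff[of x q] xA A lub_ot pq D.pre_trans unfolding x_def by blast
  have Ey: "E y r" using E_iff[of y r] xA A D.lub_iff pq D.pre_trans unfolding y_def by blast
  have "E t (od q r)" using E_iff[of t "od q r"] A D.cl D.lub_iff t by simp
  hence "od x t = od x (od q r)" using rc_od A xA D.cl by blast
  also have "\<dots> = od (od x q) r" using D.assoc A xA by simp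
  also have "od x q = x" using Ex unfolding bequiv_def bpre_def by simp
  finally have 1: "od x t = od x r" .
  have "E t (ot r q)" using E_iff[of t "ot r q"] A T.cl lub_ot t by auto
  hence "ot y t = ot y (ot r q)" using rc_ot A xA T.cl by blast
  also have "\<dots> = ot (ot y r) q" using T.assoc A xA by simp
  also have "ot y r = y" using Ey hom[of r y] xA A unfolding bequiv_def bpre_def by simp
  finally have 2: "ot y t = ot y q" .
  have "le x a" using ot_le A x_def by simp
  moreover have "le a y" using le_od A y_def by simp
  ultimately have "le x y" using le_trans A xA by blast
  hence 3: "le (od x y) (ot y x)" using K xA by simp
  have "pre a x" using T.pre_left[of a q] hom[of a x] A xA x_def by simp
  hence "od x a = x" unfolding bpre_def .
  hence 4: "od x y = od x r" using D.assoc A xA y_def by metis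
  have "pre a y" using D.pre_left A y_def by simp
  hence "ot y a = y" using hom[of a y] A xA unfolding bpre_def by simp
  hence 5: "ot y x = ot y q" using T.assoc A xA x_def by metis
  show ?thesis using 1 2 3 4 5 x_def y_def by simp
qed


lemma S2core:
  assumes A: "a\<in>A" "b\<in>A" "p\<in>A" "q\<in>A" and E: "E a p" "E b p" and pq: "pre p q" "\<not> pre q p"
    and l: "le (od a q) (ot b q)"
  shows "le a b \<and> a \<noteq> b"
proof
  have "le a (od a q)" using le_od A by simp
  moreover have "le (ot b q) b" using ot_le A by simp
  ultimately show "le a b" using l le_trans[of a "od a q" "ot b q"] le_trans[of a "ot b q" b] A D.cl T.cl by blast
  show "a \<noteq> b"
  proof
    assume "a = b"
    hence l2: "le (od a q) (ot a q)" using l by simp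
    have "le (ot a q) a" using ot_le A by simp
    hence "le (od a q) a" using l2 le_trans[of "od a q" "ot a q" a] A D.cl T.cl by blast
    moreover have "le a (od a q)" using le_od A by simp
    ultimately have "od a q = a" using le_antisym A D.cl by blast
    hence "pre q a" unfolding bpre_def .
    moreover have "pre a p" using E E_pre by simp
    ultimately have "pre q p" using D.pre_trans A by blast
    thus False using pq by simp
  qed
qed

lemma a5core:
  assumes I: "p\<in>I" "q\<in>I" and A: "a\<in>A" "b\<in>A" and E: "E a p" "E b q"
  shows "le a b \<longleftrightarrow> le (od a (jn p q)) (ot b (jn p q))"
proof -
  have pA: "p\<in>A" "q\<in>A" "jn p q \<in> A" using I IA jnA by auto
  have "E (jn p q) (od p q)" using jnI I E_sym by blast
  hence "od a (jn p q) = od a (od p q)" using rc_od A pA D.cl by blast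
  also have "\<dots> = od (od a p) q" using D.assoc A pA by simp
  also have "od a p = a" using E E_sym[of a p] unfolding bequiv_def bpre_def by blast
  also have "od a q = od a b" using rc_od[of a q b] A pA E E_sym[of b q] by simp
  finally have 1: "od a (jn p q) = od a b" .
  have "\<forall>z\<in>A. pre (jn p q) z \<longleftrightarrow> pre (ot q p) z"
  proof
    fix z assume "z\<in>A" thus "pre (jn p q) z \<longleftrightarrow> pre (ot q p) z"
      using jn_lub[of p q z] lub_ot[of q p z] I pA by auto
  qed
  hence "E (jn p q) (ot q p)" using E_iff pA T.cl by blast
  hence "ot b (jn p q) = ot b (ot q p)" using rc_ot A pA T.cl by blast
  also have "\<dots> = ot (ot b q) p" using T.assoc A pA by simp
  also have "ot b q = b" using E E_sym[of b q] hom[of q b] A pA unfolding bequiv_def bpre_def by blast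
  also have "ot b p = ot b a" using rc_ot[of b p a] A pA E E_sym[of a p] by simp
  finally have 2: "ot b (jn p q) = ot b a" .
  show ?thesis using char A 1 2 by simp
qed

abbreviation Ap where "Ap \<equiv> (\<lambda>p. {a\<in>A. E a p})"

lemma dirsys: "dir_system I jn Ap (\<lambda>p. le) (\<lambda>p q a. ot a q) (\<lambda>p q a. od a q)"
  unfolding dir_system_def
proof (intro conjI ballI impI)
  show "join_semilattice I jn" by (rule jsl)
next
  fix p assume "p\<in>I"
  show "poset_on (Ap p) le" using po unfolding poset_on_def by blast
next
  fix p q assume a: "p\<in>I" "q\<in>I" "p \<noteq> q"
  show "Ap p \<inter> Ap q = {}"
  proof (rule ccontr)
    assume "Ap p \<inter> Ap q \<noteq> {}"
    then obtain x where x: "x\<in>A" "E x p" "E x q" by blast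
    have pA: "p\<in>A" "q\<in>A" using a IA by auto
    have "\<forall>z\<in>A. pre p z \<longleftrightarrow> pre q z" using E_iff[of x p] E_iff[of x q] x pA by blast
    hence "E p q" using E_iff pA by blast
    thus False using repuniq a by blast
  qed
next
  fix p q a assume a: "p\<in>I" "q\<in>I" "jle jn p q" "a \<in> Ap p"
  have pq: "pre p q" using a1 a by blast
  have A: "a\<in>A" "p\<in>A" "q\<in>A" "E a p" using a IA by auto
  have aq: "pre a q" using A pq E_pre D.pre_trans by blast
  have "\<forall>z\<in>A. pre (ot a q) z \<longleftrightarrow> pre q z"
  proof
    fix z assume "z\<in>A" thus "pre (ot a q) z \<longleftrightarrow> pre q z" using lub_ot[of a q z] A aq D.pre_trans by blast
  qed
  hence "E (ot a q) q" using E_iff A T.cl by blast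
  thus "ot a q \<in> Ap q" using A T.cl by simp
  have "\<forall>z\<in>A. pre (od a q) z \<longleftrightarrow> pre q z"
  proof
    fix z assume "z\<in>A" thus "pre (od a q) z \<longleftrightarrow> pre q z" using D.lub_iff[of a q z] A aq D.pre_trans by blast
  qed
  hence "E (od a q) q" using E_iff A D.cl by blast
  thus "od a q \<in> Ap q" using A D.cl by simp
next
  fix p q a b assume a: "p\<in>I" "q\<in>I" "jle jn p q" "a \<in> Ap p" "b \<in> Ap p" "le a b"
  have "q\<in>A" using a IA by auto
  thus "le (ot a q) (ot b q)" "le (od a q) (od b q)" using a ps1_ot ps1_od by auto
next
  fix p a assume a: "p\<in>I" "a \<in> Ap p"
  have A: "a\<in>A" "p\<in>A" "pre p a" using a IA E_sym E_pre by auto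
  have "bpre ot p a" using hom[of p a] A by simp
  thus "ot a p = a" unfolding bpre_def .
  show "od a p = a" using A unfolding bpre_def by blast
next
  fix p q r a assume a: "p\<in>I" "q\<in>I" "r\<in>I" "jle jn p q \<and> jle jn q r" "a \<in> Ap p"
  have pq: "pre p q" "pre q r" using a1 a by auto
  have A: "a\<in>A" "p\<in>A" "q\<in>A" "r\<in>A" "E a p" using a IA by auto
  have "bpre ot q r" using pq hom[of q r] A by simp
  hence r1: "ot r q = r" unfolding bpre_def .
  have "ot (ot a q) r = ot (ot a r) q" using T.swap A by simp
  also have "\<dots> = ot a (ot r q)" using T.assoc A by simp
  finally show "ot (ot a q) r = ot a r" using r1 by simp
  have r2: "od r q = r" using pq unfolding bpre_def by simp
  have "od (od a q) r = od (od a r) q" using D.swap A by simp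
  also have "\<dots> = od a (od r q)" using D.assoc A by simp
  finally show "od (od a q) r = od a r" using r2 by simp
qed

lemma S1: "cond_S1 I jn Ap (\<lambda>p. le) (\<lambda>p q a. ot a q) (\<lambda>p q a. od a q)"
  unfolding cond_S1_def
proof (intro ballI impI)
  fix p q r a assume a: "p\<in>I" "q\<in>I" "r\<in>I" "jlt jn p q \<and> jlt jn p r" "a \<in> Ap p"
  have pq: "pre p q" "pre p r" using a1 a unfolding jlt_def by auto
  have A: "a\<in>A" "p\<in>A" "q\<in>A" "r\<in>A" "E a p" "jn q r \<in> A" using a IA jnA by auto
  have aq: "pre a q" "pre a r" using A pq E_pre D.pre_trans by blast+
  show "le (od (ot a q) (jn q r)) (ot (od a r) (jn q r))"
    using S1core[OF A(1,3,4,6) aq] jn_lub a by blast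
qed

lemma S2: "cond_S2 I jn Ap (\<lambda>p. le) (\<lambda>p q a. ot a q) (\<lambda>p q a. od a q)"
  unfolding cond_S2_def
proof (intro ballI impI)
  fix p q a b assume a: "p\<in>I" "q\<in>I" "jlt jn p q" "a \<in> Ap p" "b \<in> Ap p" "le (od a q) (ot b q)"
  have pq: "pre p q" using a1 a unfolding jlt_def by auto
  have nqp: "\<not> pre q p"
  proof
    assume "pre q p" hence "jle jn q p" using a1 a by blast
    moreover have "jn p q = jn q p" using a jsl unfolding join_semilattice_def by blast
    ultimately show False using a unfolding jlt_def jle_def by simp
  qed
  show "le a b \<and> a \<noteq> b" using S2core[of a b p q] a IA pq nqp by auto
qed

lemma partA:
  "(\<forall>p\<in>I. \<forall>q\<in>I. jle jn p q \<longleftrightarrow> bpre od p q) \<and>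
      dir_system I jn (\<lambda>p. {a\<in>A. bequiv od a p}) (\<lambda>p. le) (\<lambda>p q a. ot a q) (\<lambda>p q a. od a q) \<and>
      cond_S1 I jn (\<lambda>p. {a\<in>A. bequiv od a p}) (\<lambda>p. le) (\<lambda>p q a. ot a q) (\<lambda>p q a. od a q) \<and>
      cond_S2 I jn (\<lambda>p. {a\<in>A. bequiv od a p}) (\<lambda>p. le) (\<lambda>p q a. ot a q) (\<lambda>p q a. od a q) \<and>
      (\<forall>p\<in>I. \<forall>q\<in>I. \<forall>a. \<forall>b. a \<in> A \<and> bequiv od a p \<and> b \<in> A \<and> bequiv od b q \<longrightarrow>
         (le a b \<longleftrightarrow> le (od a (jn p q)) (ot b (jn p q))))"
  using a1 dirsys S1 S2 a5core by blast

end

locale PB =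
  fixes I :: "'i set" and jn and Ap :: "'i \<Rightarrow> 'b set" and leP psi phi and A :: "'b set" and le ot od
  assumes ds: "dir_system I jn Ap leP psi phi" and s1: "cond_S1 I jn Ap leP psi phi"
    and s2: "cond_S2 I jn Ap leP psi phi" and Adef: "A = (\<Union>p\<in>I. Ap p)"
    and df: "\<forall>p\<in>I. \<forall>q\<in>I. \<forall>a\<in>Ap p. \<forall>b\<in>Ap q.
         (le a b \<longleftrightarrow> leP (jn p q) (phi p (jn p q) a) (psi q (jn p q) b)) \<and>
         ot a b = psi p (jn p q) a \<and> od a b = phi p (jn p q) a"
begin

lemma jsl: "join_semilattice I jn" using ds unfolding dir_system_def by blast
lemma jcl: "p\<in>I \<Longrightarrow> q\<in>I \<Longrightarrow> jn p q \<in> I" using jsl unfolding join_semilattice_def by blast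
lemma jidem: "p\<in>I \<Longrightarrow> jn p p = p" using jsl unfolding join_semilattice_def by blast
lemma jcomm: "p\<in>I \<Longrightarrow> q\<in>I \<Longrightarrow> jn p q = jn q p" using jsl unfolding join_semilattice_def by blast
lemma jassoc: "p\<in>I \<Longrightarrow> q\<in>I \<Longrightarrow> r\<in>I \<Longrightarrow> jn p (jn q r) = jn (jn p q) r"
  using jsl unfolding join_semilattice_def by blast
lemma jle_refl: "p\<in>I \<Longrightarrow> jle jn p p" unfolding jle_def by (simp add: jidem)
lemma jle_l: "p\<in>I \<Longrightarrow> q\<in>I \<Longrightarrow> jle jn p (jn p q)"
proof -
  assume a: "p\<in>I" "q\<in>I"
  have "jn p (jn p q) = jn (jn p p) q" using jassoc a by simp
  thus ?thesis unfolding jle_def using jidem a by simp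
qed
lemma jle_r: "p\<in>I \<Longrightarrow> q\<in>I \<Longrightarrow> jle jn q (jn p q)"
proof -
  assume a: "p\<in>I" "q\<in>I"
  have "jle jn q (jn q p)" using jle_l a by simp
  thus ?thesis using jcomm[of p q] a by simp
qed
lemma jle_trans: "p\<in>I \<Longrightarrow> q\<in>I \<Longrightarrow> r\<in>I \<Longrightarrow> jle jn p q \<Longrightarrow> jle jn q r \<Longrightarrow> jle jn p r"
proof -
  assume a: "p\<in>I" "q\<in>I" "r\<in>I" "jle jn p q" "jle jn q r"
  hence e1: "jn p q = q" and e2: "jn q r = r" unfolding jle_def by auto
  have "jn p (jn q r) = jn (jn p q) r" using jassoc a by simp
  thus ?thesis unfolding jle_def using e1 e2 by simp
qed
lemma jle_antisym: "p\<in>I \<Longrightarrow> q\<in>I \<Longrightarrow> jle jn p q \<Longrightarrow> jle jn q p \<Longrightarrow> p = q"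
proof -
  assume a: "p\<in>I" "q\<in>I" "jle jn p q" "jle jn q p"
  hence "jn p q = q" "jn q p = p" unfolding jle_def by auto
  thus ?thesis using jcomm a by simp
qed
lemma jlub: "p\<in>I \<Longrightarrow> q\<in>I \<Longrightarrow> r\<in>I \<Longrightarrow> jle jn (jn p q) r \<longleftrightarrow> jle jn p r \<and> jle jn q r"
proof
  assume a: "p\<in>I" "q\<in>I" "r\<in>I" "jle jn (jn p q) r"
  have "jn p q \<in> I" using jcl a by simp
  thus "jle jn p r \<and> jle jn q r" using jle_l[of p q] jle_r[of p q] jle_trans[of p "jn p q" r] jle_trans[of q "jn p q" r] a by blast
next
  assume a: "p\<in>I" "q\<in>I" "r\<in>I" "jle jn p r \<and> jle jn q r"
  hence e: "jn p r = r" "jn q r = r" unfolding jle_def by auto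
  have "jn (jn p q) r = jn p (jn q r)" using jassoc a by simp
  thus "jle jn (jn p q) r" unfolding jle_def using e by simp
qed
lemma jeq: "x\<in>I \<Longrightarrow> y\<in>I \<Longrightarrow> (\<forall>z\<in>I. jle jn x z \<longleftrightarrow> jle jn y z) \<Longrightarrow> x = y"
  using jle_refl jle_antisym by blast

lemma dsc: "(\<forall>p\<in>I. poset_on (Ap p) (leP p))"
  "(\<forall>p\<in>I. \<forall>q\<in>I. p \<noteq> q \<longrightarrow> Ap p \<inter> Ap q = {})"
  "(\<forall>p\<in>I. \<forall>q\<in>I. jle jn p q \<longrightarrow>
        (\<forall>a\<in>Ap p. psi p q a \<in> Ap q \<and> phi p q a \<in> Ap q) \<and>
        (\<forall>a\<in>Ap p. \<forall>b\<in>Ap p. leP p a b \<longrightarrow>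
            leP q (psi p q a) (psi p q b) \<and> leP q (phi p q a) (phi p q b)))"
  "(\<forall>p\<in>I. \<forall>a\<in>Ap p. psi p p a = a \<and> phi p p a = a)"
  "(\<forall>p\<in>I. \<forall>q\<in>I. \<forall>r\<in>I. jle jn p q \<and> jle jn q r \<longrightarrow>
        (\<forall>a\<in>Ap p. psi q r (psi p q a) = psi p r a \<and> phi q r (phi p q a) = phi p r a))"
  using ds unfolding dir_system_def by simp_all

lemma po: "p\<in>I \<Longrightarrow> poset_on (Ap p) (leP p)" using dsc(1) by blast
lemma lrefl: "p\<in>I \<Longrightarrow> a\<in>Ap p \<Longrightarrow> leP p a a" using po unfolding poset_on_def by blast
lemma lantisym: "p\<in>I \<Longrightarrow> a\<in>Ap p \<Longrightarrow> b\<in>Ap p \<Longrightarrow> leP p a b \<Longrightarrow> leP p b a \<Longrightarrow> a = b"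
  using po unfolding poset_on_def by blast
lemma ltrans: "p\<in>I \<Longrightarrow> a\<in>Ap p \<Longrightarrow> b\<in>Ap p \<Longrightarrow> c\<in>Ap p \<Longrightarrow> leP p a b \<Longrightarrow> leP p b c \<Longrightarrow> leP p a c"
  using po unfolding poset_on_def by blast
lemma disj: "p\<in>I \<Longrightarrow> q\<in>I \<Longrightarrow> a\<in>Ap p \<Longrightarrow> a\<in>Ap q \<Longrightarrow> p = q"
  using dsc(2) by blast
lemma psiA: "p\<in>I \<Longrightarrow> q\<in>I \<Longrightarrow> jle jn p q \<Longrightarrow> a\<in>Ap p \<Longrightarrow> psi p q a \<in> Ap q"
  using dsc(3) by blast
lemma phiA: "p\<in>I \<Longrightarrow> q\<in>I \<Longrightarrow> jle jn p q \<Longrightarrow> a\<in>Ap p \<Longrightarrow> phi p q a \<in> Ap q"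
  using dsc(3) by blast
lemma psi_mono: "p\<in>I \<Longrightarrow> q\<in>I \<Longrightarrow> jle jn p q \<Longrightarrow> a\<in>Ap p \<Longrightarrow> b\<in>Ap p \<Longrightarrow> leP p a b \<Longrightarrow> leP q (psi p q a) (psi p q b)"
  using dsc(3) by blast
lemma phi_mono: "p\<in>I \<Longrightarrow> q\<in>I \<Longrightarrow> jle jn p q \<Longrightarrow> a\<in>Ap p \<Longrightarrow> b\<in>Ap p \<Longrightarrow> leP p a b \<Longrightarrow> leP q (phi p q a) (phi p q b)"
  using dsc(3) by blast
lemma psi_id: "p\<in>I \<Longrightarrow> a\<in>Ap p \<Longrightarrow> psi p p a = a" using dsc(4) by blast
lemma phi_id: "p\<in>I \<Longrightarrow> a\<in>Ap p \<Longrightarrow> phi p p a = a" using dsc(4) by blast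
lemma psi_comp: "p\<in>I \<Longrightarrow> q\<in>I \<Longrightarrow> r\<in>I \<Longrightarrow> jle jn p q \<Longrightarrow> jle jn q r \<Longrightarrow> a\<in>Ap p \<Longrightarrow> psi q r (psi p q a) = psi p r a"
  using dsc(5) by blast
lemma phi_comp: "p\<in>I \<Longrightarrow> q\<in>I \<Longrightarrow> r\<in>I \<Longrightarrow> jle jn p q \<Longrightarrow> jle jn q r \<Longrightarrow> a\<in>Ap p \<Longrightarrow> phi q r (phi p q a) = phi p r a"
  using dsc(5) by blast

lemma leD: "p\<in>I \<Longrightarrow> q\<in>I \<Longrightarrow> a\<in>Ap p \<Longrightarrow> b\<in>Ap q \<Longrightarrow> le a b \<longleftrightarrow> leP (jn p q) (phi p (jn p q) a) (psi q (jn p q) b)"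
  using df by blast
lemma otD: "p\<in>I \<Longrightarrow> q\<in>I \<Longrightarrow> a\<in>Ap p \<Longrightarrow> b\<in>Ap q \<Longrightarrow> ot a b = psi p (jn p q) a"
  using df by blast
lemma odD: "p\<in>I \<Longrightarrow> q\<in>I \<Longrightarrow> a\<in>Ap p \<Longrightarrow> b\<in>Ap q \<Longrightarrow> od a b = phi p (jn p q) a"
  using df by blast

lemma S1': assumes I: "q\<in>I" "s\<in>I" "t\<in>I" and l: "jle jn q s" "jle jn q t" and b: "b\<in>Ap q"
  shows "leP (jn s t) (phi s (jn s t) (psi q s b)) (psi t (jn s t) (phi q t b))"
proof (cases "q = s")
  case True
  hence j: "jn s t = t" using l unfolding jle_def by simp
  have "phi q t b \<in> Ap t" using phiA I l b by simp
  thus ?thesis using True j psi_id phi_id lrefl I b by simp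
next
  case F1: False
  show ?thesis
  proof (cases "q = t")
    case True
    hence j: "jn s t = s" using l jcomm I unfolding jle_def by metis
    have "psi q s b \<in> Ap s" using psiA I l b by simp
    thus ?thesis using True j psi_id phi_id lrefl I b by simp
  next
    case False
    thus ?thesis using s1 F1 I l b unfolding cond_S1_def jlt_def by blast
  qed
qed

lemma psi_le_phi: "p\<in>I \<Longrightarrow> t\<in>I \<Longrightarrow> jle jn p t \<Longrightarrow> a\<in>Ap p \<Longrightarrow> leP t (psi p t a) (phi p t a)"
proof -
  assume a: "p\<in>I" "t\<in>I" "jle jn p t" "a\<in>Ap p"
  have "psi p t a \<in> Ap t" "phi p t a \<in> Ap t" using a psiA phiA by auto
  thus ?thesis using S1'[of p t t a] a jidem phi_id psi_id by simp
qed

lemma backS2: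
  assumes I: "p\<in>I" "q\<in>I" "t\<in>I" and ab: "a\<in>Ap p" "b\<in>Ap q" and st: "jle jn (jn p q) t"
    and l: "leP t (phi p t a) (psi q t b)"
  shows "leP (jn p q) (phi p (jn p q) a) (psi q (jn p q) b)"
proof -
  define s where "s = jn p q"
  have sI: "s\<in>I" using jcl I s_def by simp
  have ps: "jle jn p s" "jle jn q s" using jle_l jle_r I s_def by auto
  have xA: "phi p s a \<in> Ap s" "psi q s b \<in> Ap s" using phiA psiA I sI ps ab by auto
  have "phi p t a = phi s t (phi p s a)" using phi_comp[of p s t a] I sI ps st ab s_def by simp
  moreover have "psi q t b = psi s t (psi q s b)" using psi_comp[of q s t b] I sI ps st ab s_def by simp
  ultimately have l2: "leP t (phi s t (phi p s a)) (psi s t (psi q s b))" using l by simp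
  show ?thesis
  proof (cases "s = t")
    case True
    thus ?thesis using l2 phi_id psi_id sI xA s_def by simp
  next
    case False
    thus ?thesis using s2 l2 sI I st xA s_def unfolding cond_S2_def jlt_def by blast
  qed
qed


lemma inA: "a\<in>A \<Longrightarrow> \<exists>p\<in>I. a\<in>Ap p" using Adef by blast
lemma ApA: "p\<in>I \<Longrightarrow> a\<in>Ap p \<Longrightarrow> a\<in>A" using Adef by blast

lemma leS: "s\<in>I \<Longrightarrow> x\<in>Ap s \<Longrightarrow> y\<in>Ap s \<Longrightarrow> le x y \<longleftrightarrow> leP s x y"
  using leD[of s s x y] jidem phi_id psi_id by simp

lemma le_reflB: "p\<in>I \<Longrightarrow> a\<in>Ap p \<Longrightarrow> le a a" using leS lrefl by blast

lemma le_transB: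
  assumes I: "p\<in>I" "q\<in>I" "r\<in>I" and abc: "a\<in>Ap p" "b\<in>Ap q" "c\<in>Ap r" and l: "le a b" "le b c"
  shows "le a c"
proof -
  define s1 where "s1 = jn p q"
  define s2 where "s2 = jn q r"
  define u where "u = jn s1 s2"
  have sI: "s1\<in>I" "s2\<in>I" "u\<in>I" using jcl I s1_def s2_def u_def by auto
  have j: "jle jn p s1" "jle jn q s1" "jle jn q s2" "jle jn r s2" "jle jn s1 u" "jle jn s2 u"
    using jle_l jle_r I sI s1_def s2_def u_def by auto
  have L1: "leP s1 (phi p s1 a) (psi q s1 b)" using leD l(1) I abc s1_def by simp
  have L2: "leP s2 (phi q s2 b) (psi r s2 c)" using leD l(2) I abc s2_def by simp
  have m1: "phi p s1 a \<in> Ap s1" "psi q s1 b \<in> Ap s1" "phi q s2 b \<in> Ap s2" "psi r s2 c \<in> Ap s2"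
    using phiA psiA I sI j abc by auto
  have m2: "phi s1 u (phi p s1 a) \<in> Ap u" "phi s1 u (psi q s1 b) \<in> Ap u"
    "psi s2 u (phi q s2 b) \<in> Ap u" "psi s2 u (psi r s2 c) \<in> Ap u"
    using phiA psiA sI j m1 by auto
  have x1: "leP u (phi s1 u (phi p s1 a)) (phi s1 u (psi q s1 b))" using phi_mono sI j m1 L1 by blast
  have x2: "leP u (phi s1 u (psi q s1 b)) (psi s2 u (phi q s2 b))" using S1'[of q s1 s2 b] I sI j abc u_def by simp
  have x3: "leP u (psi s2 u (phi q s2 b)) (psi s2 u (psi r s2 c))" using psi_mono sI j m1 L2 by blast
  have "leP u (phi s1 u (phi p s1 a)) (psi s2 u (psi r s2 c))"
    using ltrans[OF sI(3) m2(1) m2(2) m2(3) x1 x2] ltrans[OF sI(3) m2(1) m2(3) m2(4) _ x3] by blast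
  moreover have "phi s1 u (phi p s1 a) = phi p u a" using phi_comp I sI j abc by blast
  moreover have "psi s2 u (psi r s2 c) = psi r u c" using psi_comp I sI j abc by blast
  ultimately have L: "leP u (phi p u a) (psi r u c)" by simp
  have "jle jn p u" "jle jn r u" using jle_trans I sI j by blast+
  hence "jle jn (jn p r) u" using jlub I sI by blast
  hence "leP (jn p r) (phi p (jn p r) a) (psi r (jn p r) c)" using backS2[OF I(1) I(3) sI(3) abc(1) abc(3)] L by blast
  thus ?thesis using leD I abc by blast
qed

lemma le_antisymB:
  assumes I: "p\<in>I" "q\<in>I" and ab: "a\<in>Ap p" "b\<in>Ap q" and l: "le a b" "le b a"
  shows "a = b"
proof -
  define s where "s = jn p q"
  have sI: "s\<in>I" using jcl I s_def by auto
  have sc: "jn q p = s" using jcomm I s_def by simp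
  have j: "jle jn p s" "jle jn q s" using jle_l jle_r I s_def by auto
  have L1: "leP s (phi p s a) (psi q s b)" using leD l(1) I ab s_def by simp
  have L2: "leP s (phi q s b) (psi p s a)" using leD[of q p b a] l(2) I ab sc by simp
  have m: "phi p s a \<in> Ap s" "psi q s b \<in> Ap s" "phi q s b \<in> Ap s" "psi p s a \<in> Ap s"
    using phiA psiA I sI j ab by auto
  have P1: "leP s (psi q s b) (phi q s b)" using psi_le_phi I sI j ab by blast
  have P2: "leP s (psi p s a) (phi p s a)" using psi_le_phi I sI j ab by blast
  have A1: "leP s (phi p s a) (psi p s a)"
    using ltrans[OF sI m(1) m(2) m(3) L1 P1] ltrans[OF sI m(1) m(3) m(4) _ L2] by blast
  have A2: "leP s (phi q s b) (psi q s b)"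
    using ltrans[OF sI m(3) m(4) m(1) L2 P2] ltrans[OF sI m(3) m(1) m(2) _ L1] by blast
  have ps: "p = s"
  proof (rule ccontr)
    assume "p \<noteq> s"
    hence "jlt jn p s" using j unfolding jlt_def by simp
    hence "a \<noteq> a" using s2 A1 I sI ab unfolding cond_S2_def by blast
    thus False by simp
  qed
  have qs: "q = s"
  proof (rule ccontr)
    assume "q \<noteq> s"
    hence "jlt jn q s" using j unfolding jlt_def by simp
    hence "b \<noteq> b" using s2 A2 I sI ab unfolding cond_S2_def by blast
    thus False by simp
  qed
  have "leP s a b" "leP s b a" using L1 L2 ps qs phi_id psi_id sI ab by auto
  thus ?thesis using lantisym sI ab ps qs by blast
qed

lemma posetB: "poset_on A le"
  unfolding poset_on_def
proof (intro conjI ballI impI)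
  fix a assume "a\<in>A" then obtain p where "p\<in>I" "a\<in>Ap p" using inA by blast
  thus "le a a" using le_reflB by blast
next
  fix a b assume "a\<in>A" "b\<in>A" "le a b \<and> le b a"
  thus "a = b" using inA le_antisymB by metis
next
  fix a b c assume a: "a\<in>A" "b\<in>A" "c\<in>A" "le a b \<and> le b c"
  obtain p q r where "p\<in>I" "a\<in>Ap p" "q\<in>I" "b\<in>Ap q" "r\<in>I" "c\<in>Ap r" using inA a by metis
  thus "le a c" using le_transB a by blast
qed


lemma lnb_gen:
  assumes gA: "\<And>p q a. p\<in>I \<Longrightarrow> q\<in>I \<Longrightarrow> jle jn p q \<Longrightarrow> a\<in>Ap p \<Longrightarrow> g p q a \<in> Ap q"
    and gid: "\<And>p a. p\<in>I \<Longrightarrow> a\<in>Ap p \<Longrightarrow> g p p a = a"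
    and gc: "\<And>p q r a. p\<in>I \<Longrightarrow> q\<in>I \<Longrightarrow> r\<in>I \<Longrightarrow> jle jn p q \<Longrightarrow> jle jn q r \<Longrightarrow> a\<in>Ap p \<Longrightarrow> g q r (g p q a) = g p r a"
    and hD: "\<And>p q a b. p\<in>I \<Longrightarrow> q\<in>I \<Longrightarrow> a\<in>Ap p \<Longrightarrow> b\<in>Ap q \<Longrightarrow> h a b = g p (jn p q) a"
  shows "lnband A h \<and> (\<forall>p\<in>I. \<forall>q\<in>I. \<forall>a\<in>Ap p. \<forall>b\<in>Ap q. bpre h a b \<longleftrightarrow> jle jn p q)"
proof -
  have hA: "h a b \<in> Ap (jn p q)" if "p\<in>I" "q\<in>I" "a\<in>Ap p" "b\<in>Ap q" for p q a b
    using hD[OF that] gA[of p "jn p q" a] jcl jle_l that by simp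
  have ln: "lnband A h" unfolding lnband_def
  proof (intro conjI ballI)
    fix a b assume "a\<in>A" "b\<in>A"
    then obtain p q where pq: "p\<in>I" "q\<in>I" "a\<in>Ap p" "b\<in>Ap q" using inA by metis
    show "h a b \<in> A" using hA[OF pq] ApA jcl pq by blast
  next
    fix a assume "a\<in>A"
    then obtain p where p: "p\<in>I" "a\<in>Ap p" using inA by metis
    show "h a a = a" using hD[OF p(1) p(1) p(2) p(2)] jidem gid p by simp
  next
    fix a b c assume "a\<in>A" "b\<in>A" "c\<in>A"
    then obtain p q r where pq: "p\<in>I" "q\<in>I" "r\<in>I" "a\<in>Ap p" "b\<in>Ap q" "c\<in>Ap r" using inA by metis
    have J: "jn p q \<in> I" "jn q r \<in> I" "jn r q \<in> I" "jn (jn p q) r \<in> I" using jcl pq by auto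
    have bc: "h b c \<in> Ap (jn q r)" "h c b \<in> Ap (jn r q)" "h a b \<in> Ap (jn p q)" using hA pq by auto
    have 1: "h a (h b c) = g p (jn p (jn q r)) a" using hD[OF pq(1) J(2) pq(4) bc(1)] .
    have 2: "h a (h c b) = g p (jn p (jn r q)) a" using hD[OF pq(1) J(3) pq(4) bc(2)] .
    have "h (h a b) c = g (jn p q) (jn (jn p q) r) (h a b)" using hD[OF J(1) pq(3) bc(3) pq(6)] .
    also have "\<dots> = g (jn p q) (jn (jn p q) r) (g p (jn p q) a)" using hD pq by simp
    also have "\<dots> = g p (jn (jn p q) r) a" using gc[of p "jn p q" "jn (jn p q) r" a] pq J jle_l by simp
    finally have 3: "h (h a b) c = g p (jn (jn p q) r) a" .
    show "h a (h b c) = h (h a b) c" using 1 3 jassoc pq by simp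
    show "h a (h b c) = h a (h c b)" using 1 2 jcomm pq by simp
  qed
  have "bpre h a b \<longleftrightarrow> jle jn p q" if pq: "p\<in>I" "q\<in>I" "a\<in>Ap p" "b\<in>Ap q" for p q a b
  proof
    assume "jle jn p q"
    hence "jn q p = q" using jcomm pq unfolding jle_def by simp
    thus "bpre h a b" unfolding bpre_def using hD[of q p b a] pq gid by simp
  next
    assume "bpre h a b"
    hence e: "g q (jn q p) b = b" using hD[of q p b a] pq unfolding bpre_def by simp
    have "g q (jn q p) b \<in> Ap (jn q p)" using gA jcl jle_l pq by blast
    hence "b \<in> Ap (jn q p)" using e by simp
    hence "jn q p = q" using disj[of "jn q p" q b] jcl pq by simp
    thus "jle jn p q" using jcomm pq unfolding jle_def by simp
  qed
  thus ?thesis using ln by blast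
qed

lemma bandT: "lnband A ot \<and> (\<forall>p\<in>I. \<forall>q\<in>I. \<forall>a\<in>Ap p. \<forall>b\<in>Ap q. bpre ot a b \<longleftrightarrow> jle jn p q)"
  by (rule lnb_gen[of psi]) (auto simp: psiA psi_id psi_comp otD)
lemma bandD: "lnband A od \<and> (\<forall>p\<in>I. \<forall>q\<in>I. \<forall>a\<in>Ap p. \<forall>b\<in>Ap q. bpre od a b \<longleftrightarrow> jle jn p q)"
  by (rule lnb_gen[of phi]) (auto simp: phiA phi_id phi_comp odD)

lemma ps1B:
  assumes I: "p\<in>I" "q\<in>I" "r\<in>I" and abc: "a\<in>Ap p" "b\<in>Ap q" "c\<in>Ap r" and l: "le a b"
  shows "le (ot a c) (ot b c) \<and> le (od a c) (od b c)"
proof -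
  define s where "s = jn p q"
  define pr where "pr = jn p r"
  define qr where "qr = jn q r"
  define w where "w = jn pr qr"
  have sI: "s\<in>I" "pr\<in>I" "qr\<in>I" "w\<in>I" using jcl I s_def pr_def qr_def w_def by auto
  have j: "jle jn p s" "jle jn q s" "jle jn p pr" "jle jn r pr" "jle jn q qr" "jle jn r qr" "jle jn pr w" "jle jn qr w"
    using jle_l jle_r I sI s_def pr_def qr_def w_def by auto
  have jsw: "jle jn s w" using jlub[of p q w] jle_trans I sI j s_def by blast
  have w1: "jn pr s = w"
  proof (rule jeq)
    show "jn pr s \<in> I" "w\<in>I" using jcl sI by auto
    show "\<forall>z\<in>I. jle jn (jn pr s) z \<longleftrightarrow> jle jn w z"
      using jlub sI I unfolding s_def pr_def qr_def w_def by auto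
  qed
  have w2: "jn s qr = w"
  proof (rule jeq)
    show "jn s qr \<in> I" "w\<in>I" using jcl sI by auto
    show "\<forall>z\<in>I. jle jn (jn s qr) z \<longleftrightarrow> jle jn w z"
      using jlub sI I unfolding s_def pr_def qr_def w_def by auto
  qed
  have L: "leP s (phi p s a) (psi q s b)" using leD l I abc s_def by simp
  have m: "phi p s a \<in> Ap s" "psi q s b \<in> Ap s" "psi p pr a \<in> Ap pr" "psi q qr b \<in> Ap qr"
    "phi p pr a \<in> Ap pr" "phi q qr b \<in> Ap qr" using phiA psiA I sI j abc by auto
  have m2: "phi pr w (psi p pr a) \<in> Ap w" "psi s w (phi p s a) \<in> Ap w" "psi s w (psi q s b) \<in> Ap w"
    "phi s w (phi p s a) \<in> Ap w" "phi s w (psi q s b) \<in> Ap w" "psi qr w (phi q qr b) \<in> Ap w"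
    using phiA psiA sI j jsw m by auto
  have ot1: "ot a c = psi p pr a" "ot b c = psi q qr b" using otD I abc pr_def qr_def by auto
  have od1: "od a c = phi p pr a" "od b c = phi q qr b" using odD I abc pr_def qr_def by auto
  have x1: "leP w (phi pr w (psi p pr a)) (psi s w (phi p s a))"
    using S1'[of p pr s a] I sI j abc w1 by simp
  have x2: "leP w (psi s w (phi p s a)) (psi s w (psi q s b))" using psi_mono sI jsw m L by blast
  have e1: "psi s w (psi q s b) = psi q w b" using psi_comp I sI j jsw abc by blast
  have e2: "psi qr w (psi q qr b) = psi q w b" using psi_comp I sI j abc by blast
  have "leP w (phi pr w (psi p pr a)) (psi qr w (psi q qr b))"
    using ltrans[OF sI(4) m2(1) m2(2) m2(3) x1 x2] e1 e2 by simp
  hence "le (psi p pr a) (psi q qr b)" using leD[of pr qr "psi p pr a" "psi q qr b"] sI m w_def by simp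
  hence T: "le (ot a c) (ot b c)" using ot1 by simp
  have y1: "leP w (phi s w (phi p s a)) (phi s w (psi q s b))" using phi_mono sI jsw m L by blast
  have y2: "leP w (phi s w (psi q s b)) (psi qr w (phi q qr b))"
    using S1'[of q s qr b] I sI j abc w2 by simp
  have e3: "phi s w (phi p s a) = phi p w a" using phi_comp I sI j jsw abc by blast
  have e4: "phi pr w (phi p pr a) = phi p w a" using phi_comp I sI j abc by blast
  have "leP w (phi pr w (phi p pr a)) (psi qr w (phi q qr b))"
    using ltrans[OF sI(4) m2(4) m2(5) m2(6) y1 y2] e3 e4 by simp
  hence "le (phi p pr a) (phi q qr b)" using leD[of pr qr "phi p pr a" "phi q qr b"] sI m w_def by simp
  hence D: "le (od a c) (od b c)" using od1 by simp
  show ?thesis using T D by simp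
qed

lemma ps2B:
  assumes I: "p\<in>I" "q\<in>I" and ab: "a\<in>Ap p" "b\<in>Ap q" and l: "le (od a b) (ot b a)"
  shows "le a b"
proof -
  define s where "s = jn p q"
  have sI: "s\<in>I" using jcl I s_def by auto
  have sc: "jn q p = s" using jcomm I s_def by simp
  have j: "jle jn p s" "jle jn q s" using jle_l jle_r I s_def by auto
  have e: "od a b = phi p s a" "ot b a = psi q s b" using odD otD I ab s_def sc by auto
  have m: "phi p s a \<in> Ap s" "psi q s b \<in> Ap s" using phiA psiA I sI j ab by auto
  have "leP s (phi p s a) (psi q s b)" using leS[OF sI m] l e by simp
  thus ?thesis using leD I ab s_def by simp
qed

lemma partB:
  "poset_on A le \<and> partition_pair A le ot od \<and>
      (\<forall>p\<in>I. \<forall>q\<in>I. \<forall>a\<in>Ap p. \<forall>b\<in>Ap q.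
         (bequiv od a b \<longleftrightarrow> p = q) \<and> (bpre od a b \<longleftrightarrow> jle jn p q)) \<and>
      (\<forall>rep. (\<forall>p\<in>I. rep p \<in> Ap p) \<longrightarrow>
         (\<forall>p\<in>I. \<forall>q\<in>I. jle jn p q \<longrightarrow>
            (\<forall>a\<in>Ap p. ot a (rep q) = psi p q a \<and> od a (rep q) = phi p q a)))"
proof (intro conjI)
  show "poset_on A le" by (rule posetB)
  show "partition_pair A le ot od" unfolding partition_pair_def
  proof (intro conjI ballI impI)
    show "lnband A ot" using bandT by blast
    show "lnband A od" using bandD by blast
    show "homotactic A ot od" unfolding homotactic_def
    proof (intro ballI)
      fix a b assume "a\<in>A" "b\<in>A"
      then obtain p q where pq: "p\<in>I" "q\<in>I" "a\<in>Ap p" "b\<in>Ap q" using inA by metis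
      show "bpre ot a b = bpre od a b" using bandT bandD pq by blast
    qed
  next
    fix a b c assume a: "a\<in>A" "b\<in>A" "c\<in>A" "le a b"
    then obtain p q r where pq: "p\<in>I" "q\<in>I" "r\<in>I" "a\<in>Ap p" "b\<in>Ap q" "c\<in>Ap r" using inA by metis
    show "le (ot a c) (ot b c)" "le (od a c) (od b c)" using ps1B[OF pq] a by auto
  next
    fix a b assume a: "a\<in>A" "b\<in>A" "le (od a b) (ot b a)"
    then obtain p q where pq: "p\<in>I" "q\<in>I" "a\<in>Ap p" "b\<in>Ap q" using inA by metis
    show "le a b" using ps2B[OF pq] a by blast
  qed
  show "\<forall>p\<in>I. \<forall>q\<in>I. \<forall>a\<in>Ap p. \<forall>b\<in>Ap q.
         (bequiv od a b \<longleftrightarrow> p = q) \<and> (bpre od a b \<longleftrightarrow> jle jn p q)"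
  proof (intro ballI conjI)
    fix p q a b assume pq: "p\<in>I" "q\<in>I" "a\<in>Ap p" "b\<in>Ap q"
    have 1: "bpre od a b \<longleftrightarrow> jle jn p q" "bpre od b a \<longleftrightarrow> jle jn q p" using bandD pq by blast+
    thus "bpre od a b \<longleftrightarrow> jle jn p q" by simp
    show "bequiv od a b \<longleftrightarrow> p = q" unfolding bequiv_def 1 using jle_antisym jle_refl pq by blast
  qed
  show "\<forall>rep. (\<forall>p\<in>I. rep p \<in> Ap p) \<longrightarrow>
         (\<forall>p\<in>I. \<forall>q\<in>I. jle jn p q \<longrightarrow>
            (\<forall>a\<in>Ap p. ot a (rep q) = psi p q a \<and> od a (rep q) = phi p q a))"
  proof (intro allI impI ballI conjI)
    fix rep p q a assume r: "\<forall>p\<in>I. rep p \<in> Ap p" and pq: "p\<in>I" "q\<in>I" "jle jn p q" "a\<in>Ap p"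
    have "jn p q = q" using pq unfolding jle_def by simp
    thus "ot a (rep q) = psi p q a" "od a (rep q) = phi p q a" using otD odD r pq by auto
  qed
qed


end

theorem theorem5p2:
  shows
  "(\<forall>(A :: 'a set) le ot od (I :: 'a set) jn.
      poset_on A le \<and> partition_pair A le ot od \<and>
      I \<subseteq> A \<and> (\<forall>a\<in>A. \<exists>!p. p \<in> I \<and> bequiv od a p) \<and>
      (\<forall>p\<in>I. \<forall>q\<in>I. jn p q \<in> I \<and> bequiv od (od p q) (jn p q))
    \<longrightarrow>
      (\<forall>p\<in>I. \<forall>q\<in>I. jle jn p q \<longleftrightarrow> bpre od p q) \<and>
      dir_system I jn (\<lambda>p. {a\<in>A. bequiv od a p}) (\<lambda>p. le) (\<lambda>p q a. ot a q) (\<lambda>p q a. od a q) \<and>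
      cond_S1 I jn (\<lambda>p. {a\<in>A. bequiv od a p}) (\<lambda>p. le) (\<lambda>p q a. ot a q) (\<lambda>p q a. od a q) \<and>
      cond_S2 I jn (\<lambda>p. {a\<in>A. bequiv od a p}) (\<lambda>p. le) (\<lambda>p q a. ot a q) (\<lambda>p q a. od a q) \<and>
      (\<forall>p\<in>I. \<forall>q\<in>I. \<forall>a. \<forall>b. a \<in> A \<and> bequiv od a p \<and> b \<in> A \<and> bequiv od b q \<longrightarrow>
         (le a b \<longleftrightarrow> le (od a (jn p q)) (ot b (jn p q)))))
  \<and>
   (\<forall>(I :: 'i set) jn (Ap :: 'i \<Rightarrow> 'b set) leP psi phi A le ot od.
      dir_system I jn Ap leP psi phi \<and>
      cond_S1 I jn Ap leP psi phi \<and> cond_S2 I jn Ap leP psi phi \<and>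
      A = (\<Union>p\<in>I. Ap p) \<and>
      (\<forall>p\<in>I. \<forall>q\<in>I. \<forall>a\<in>Ap p. \<forall>b\<in>Ap q.
         (le a b \<longleftrightarrow> leP (jn p q) (phi p (jn p q) a) (psi q (jn p q) b)) \<and>
         ot a b = psi p (jn p q) a \<and> od a b = phi p (jn p q) a)
    \<longrightarrow>
      poset_on A le \<and> partition_pair A le ot od \<and>
      (\<forall>p\<in>I. \<forall>q\<in>I. \<forall>a\<in>Ap p. \<forall>b\<in>Ap q.
         (bequiv od a b \<longleftrightarrow> p = q) \<and> (bpre od a b \<longleftrightarrow> jle jn p q)) \<and>
      (\<forall>rep. (\<forall>p\<in>I. rep p \<in> Ap p) \<longrightarrow>
         (\<forall>p\<in>I. \<forall>q\<in>I. jle jn p q \<longrightarrow>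
            (\<forall>a\<in>Ap p. ot a (rep q) = psi p q a \<and> od a (rep q) = phi p q a))))"
  apply (rule conjI)
   apply (intro allI impI)
   apply (rule PA.partA)
   apply (unfold PA_def)
   apply blast
  apply (intro allI impI)
  subgoal for I jn Ap leP psi phi A le ot od
    apply (rule PB.partB[of I jn Ap leP psi phi A le ot od])
    apply (unfold PB_def)
    apply blast
    done
  done

end
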